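(* Let $\mu\in\mathbb{R}$, $\alpha>0$, $\lambda_1,\dots,\lambda_n,\lambda^*_1,\dots,\lambda^*_n>0$. Let $X_1,\dots,X_n$ be independent with $X_i\sim\mathrm{Fr\acute{e}}(\mu,\lambda_i,\alpha)$ and $X^*_1,\dots,X^*_n$ independent with $X^*_i\sim\mathrm{Fr\acute{e}}(\mu,\lambda^*_i,\alpha)$. (i) If $\alpha\ge1$ and $\sum_{i=j}^{n}\lambda^*_{(i)}\le\sum_{i=j}^{n}\lambda_{(i)}$ for all $j=1,\dots,n$, then $X_{n:n}\ge_{\rm rh}X^*_{n:n}$. (ii) If $0<\alpha\le1$ and $\sum_{i=1}^{j}\lambda^*_{(i)}\ge\sum_{i=1}^{j}\lambda_{(i)}$ for all $j=1,\dots,n$, then $X_{n:n}\le_{\rm rh}X^*_{n:n}$.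
   Context: $X\sim \mathrm{Fr\acute{e}}(\mu,\lambda,\alpha)$ means distribution function $\exp\{-((x-\mu)/\lambda)^{-\alpha}\}$ for $x>\mu$. $X_{n:n}=\max_i X_i$. $\lambda_{(1)}\le\dots\le\lambda_{(n)}$ are the components in increasing order. $X\le_{\rm rh}Y$ means the reversed hazard rate $F'/F$ of $X$ is pointwise $\le$ that of $Y$. *)

theory Defs
  imports "HOL-Probability.Probability"
begin

definition frechet_cdf :: "real \<Rightarrow> real \<Rightarrow> real \<Rightarrow> real \<Rightarrow> real" where
  "frechet_cdf mu lam alpha x = (if x > mu then exp (- (((x - mu) / lam) powr (- alpha))) else 0)"

definition is_frechet :: "'a measure \<Rightarrow> ('a \<Rightarrow> real) \<Rightarrow> real \<Rightarrow> real \<Rightarrow> real \<Rightarrow> bool" where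
  "is_frechet M X mu lam alpha \<longleftrightarrow> X \<in> borel_measurable M \<and>
     (\<forall>x. measure M {w \<in> space M. X w \<le> x} = frechet_cdf mu lam alpha x)"

definition max_cdf :: "'a measure \<Rightarrow> (nat \<Rightarrow> 'a \<Rightarrow> real) \<Rightarrow> nat \<Rightarrow> real \<Rightarrow> real" where
  "max_cdf M X n x = measure M {w \<in> space M. Max ((\<lambda>i. X i w) ` {1..n}) \<le> x}"

definition rev_hazard :: "(real \<Rightarrow> real) \<Rightarrow> real \<Rightarrow> real" where
  "rev_hazard F x = deriv F x / F x"

definition rh_le :: "(real \<Rightarrow> real) \<Rightarrow> (real \<Rightarrow> real) \<Rightarrow> bool" where
  "rh_le F G \<longleftrightarrow> (\<forall>x. rev_hazard F x \<le> rev_hazard G x)"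

definition ord_stat :: "nat \<Rightarrow> (nat \<Rightarrow> real) \<Rightarrow> nat \<Rightarrow> real" where
  "ord_stat n lam k = sort (map lam [1..<Suc n]) ! (k - 1)"

end

theory Submission imports Defs begin


lemma max_cdf_prod:
  assumes P: "prob_space M" and n: "n \<ge> 1"
    and ind: "prob_space.indep_vars M (\<lambda>_. borel) X {1..n}"
    and fr: "\<forall>i\<in>{1..n}. is_frechet M (X i) mu (lam i) alpha"
  shows "max_cdf M X n x = (\<Prod>i\<in>{1..n}. frechet_cdf mu (lam i) alpha x)"
proof -
  interpret prob_space M by (rule P)
  have ne: "{1..n} \<noteq> {}" using n by auto
  have set_eq: "{w \<in> space M. Max ((\<lambda>i. X i w) ` {1..n}) \<le> x}
      = (\<Inter>i\<in>{1..n}. X i -` {..x} \<inter> space M)"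
    using ne by (auto simp: Max_le_iff)
  have "max_cdf M X n x = prob (\<Inter>i\<in>{1..n}. X i -` {..x} \<inter> space M)"
    unfolding max_cdf_def set_eq by simp
  also have "\<dots> = (\<Prod>i\<in>{1..n}. prob (X i -` {..x} \<inter> space M))"
  proof (rule indep_setsD)
    show "indep_sets (\<lambda>i. {X i -` A \<inter> space M | A. A \<in> sets borel}) {1..n}"
      using ind unfolding indep_vars_def2 by auto
  qed (use ne in \<open>auto intro!: exI[where x="{..x}"]\<close>)
  also have "\<dots> = (\<Prod>i\<in>{1..n}. frechet_cdf mu (lam i) alpha x)"
  proof (rule prod.cong)
    fix i assume i: "i \<in> {1..n}"
    have "X i -` {..x} \<inter> space M = {w \<in> space M. X i w \<le> x}" by auto
    then show "prob (X i -` {..x} \<inter> space M) = frechet_cdf mu (lam i) alpha x"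
      using fr i unfolding is_frechet_def by auto
  qed simp
  finally show ?thesis .
qed

definition Gf :: "real \<Rightarrow> real \<Rightarrow> real \<Rightarrow> real \<Rightarrow> real" where
  "Gf mu alpha L x = (if x > mu then exp (- ((x - mu) powr (- alpha) * L)) else 0)"

lemma prod_frechet:
  fixes n :: nat and lam :: "nat \<Rightarrow> real"
  assumes n: "n \<ge> 1" and pos: "\<forall>i\<in>{1..n}. lam i > 0"
  shows "(\<Prod>i\<in>{1..n}. frechet_cdf mu (lam i) alpha x)
        = Gf mu alpha (\<Sum>i\<in>{1..n}. lam i powr alpha) x"
proof (cases "x > mu")
  case True
  have "(\<Prod>i\<in>{1..n}. frechet_cdf mu (lam i) alpha x)
      = (\<Prod>i\<in>{1..n}. exp (- ((x - mu) powr (- alpha) * lam i powr alpha)))"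
  proof (rule prod.cong)
    fix i assume i: "i \<in> {1..n}"
    have l: "lam i > 0" using pos i by auto
    have "((x - mu) / lam i) powr (- alpha) = (x - mu) powr (- alpha) / lam i powr (- alpha)"
      using True l by (simp add: powr_divide)
    also have "\<dots> = (x - mu) powr (- alpha) * lam i powr alpha"
      by (simp add: powr_minus divide_inverse)
    finally show "frechet_cdf mu (lam i) alpha x = exp (- ((x - mu) powr (- alpha) * lam i powr alpha))"
      using True by (simp add: frechet_cdf_def)
  qed simp
  also have "\<dots> = exp (\<Sum>i\<in>{1..n}. - ((x - mu) powr (- alpha) * lam i powr alpha))"
    by (subst exp_sum) auto
  also have "\<dots> = Gf mu alpha (\<Sum>i\<in>{1..n}. lam i powr alpha) x"
    using True by (simp add: Gf_def sum_distrib_left sum_negf)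
  finally show ?thesis .
next
  case False
  have "1 \<in> {1..n}" using n by auto
  then show ?thesis using False
    by (auto simp: Gf_def frechet_cdf_def intro!: prod_zero)
qed

lemma rev_hazard_Gf:
  shows "rev_hazard (Gf mu alpha L) x = (if x > mu then alpha * (x - mu) powr (- alpha - 1) * L else 0)"
proof (cases "x > mu")
  case True
  let ?H = "\<lambda>y. exp (- ((y - mu) powr (- alpha) * L))"
  have d0: "((\<lambda>y. (y - mu) powr (- alpha)) has_real_derivative (- alpha) * (x - mu) powr (- alpha - 1)) (at x)"
    using has_real_derivative_powr[of "x - mu" "- alpha"] True
    by (auto intro!: derivative_eq_intros DERIV_chain2[of "\<lambda>z. z powr (- alpha)"])
  have dH: "(?H has_real_derivative ?H x * (alpha * (x - mu) powr (- alpha - 1) * L)) (at x)"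
    by (rule derivative_eq_intros d0 refl | simp)+
  have dG: "(Gf mu alpha L has_real_derivative ?H x * (alpha * (x - mu) powr (- alpha - 1) * L)) (at x)"
  proof (rule has_field_derivative_transform_within_open[OF dH, of "{mu<..}"])
  qed (use True in \<open>auto simp: Gf_def\<close>)
  have "deriv (Gf mu alpha L) x = ?H x * (alpha * (x - mu) powr (- alpha - 1) * L)"
    using DERIV_imp_deriv[OF dG] .
  moreover have "Gf mu alpha L x = ?H x" using True by (simp add: Gf_def)
  ultimately show ?thesis using True by (simp add: rev_hazard_def)
next
  case False
  then show ?thesis by (simp add: rev_hazard_def Gf_def)
qed

lemma tangent_convex:
  fixes a b alpha :: real
  assumes "alpha \<ge> 1" "a > 0" "b > 0"
  shows "a powr alpha - b powr alpha \<ge> alpha * b powr (alpha - 1) * (a - b)"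
proof -
  have d: "((\<lambda>x. x powr alpha) has_field_derivative alpha * b powr (alpha - 1)) (at b within {0<..})"
    using has_real_derivative_powr[of b alpha] assms by (auto intro: has_field_derivative_at_within)
  show ?thesis
    using convex_on_imp_above_tangent[OF powr_convex[OF assms(1)] _ _ _ d, of a] assms
    by (auto simp: interior_open)
qed

lemma tangent_concave:
  fixes a b alpha :: real
  assumes "alpha \<le> 1" "a > 0" "b > 0" "alpha > 0"
  shows "a powr alpha - b powr alpha \<le> alpha * b powr (alpha - 1) * (a - b)"
proof -
  have cv: "convex_on {0<..} (\<lambda>x. - (x powr alpha))"
  proof (rule convex_on_realI[where f' = "\<lambda>x. - (alpha * x powr (alpha - 1))"])
    fix x :: real assume "x \<in> {0<..}"
    then show "((\<lambda>x. - (x powr alpha)) has_real_derivative - (alpha * x powr (alpha - 1))) (at x)"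
      using has_real_derivative_powr[of x alpha] by (auto intro: DERIV_minus)
  next
    fix x y :: real assume "x \<in> {0<..}" "y \<in> {0<..}" "x \<le> y"
    then have "y powr (alpha - 1) \<le> x powr (alpha - 1)"
      using assms by (intro powr_mono2') auto
    then show "- (alpha * x powr (alpha - 1)) \<le> - (alpha * y powr (alpha - 1))"
      using assms mult_left_mono[of "y powr (alpha - 1)" "x powr (alpha - 1)" alpha] by auto
  qed auto
  have d: "((\<lambda>x. - (x powr alpha)) has_field_derivative - (alpha * b powr (alpha - 1))) (at b within {0<..})"
    using has_real_derivative_powr[of b alpha] assms by (auto intro: has_field_derivative_at_within DERIV_minus)
  show ?thesis
    using convex_on_imp_above_tangent[OF cv _ _ _ d, of a] assms
    by (auto simp: interior_open)
qed

lemma abel_suffix: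
  fixes c d :: "nat \<Rightarrow> real" and n :: nat
  assumes mono: "\<And>i j. 1 \<le> i \<Longrightarrow> i \<le> j \<Longrightarrow> j \<le> n \<Longrightarrow> c i \<le> c j"
    and c1: "c 1 \<ge> 0" and S: "\<And>j. 1 \<le> j \<Longrightarrow> j \<le> n \<Longrightarrow> (\<Sum>i=j..n. d i) \<ge> 0"
    and n: "n \<ge> 1"
  shows "(\<Sum>i=1..n. c i * d i) \<ge> 0"
proof -
  have key: "1 \<le> m \<longrightarrow> (\<Sum>i=m..n. c i * d i) \<ge> c m * (\<Sum>i=m..n. d i)" if "m \<le> n" for m
    using that
  proof (induction m rule: inc_induct)
    case base
    then show ?case by simp
  next
    case (step m)
    show ?case
    proof
      assume m1: "1 \<le> m"
      have e1: "(\<Sum>i=m..n. c i * d i) = c m * d m + (\<Sum>i=Suc m..n. c i * d i)"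
        using step.hyps by (simp add: sum.atLeast_Suc_atMost)
      have e2: "(\<Sum>i=m..n. d i) = d m + (\<Sum>i=Suc m..n. d i)"
        using step.hyps by (simp add: sum.atLeast_Suc_atMost)
      have ih: "(\<Sum>i=Suc m..n. c i * d i) \<ge> c (Suc m) * (\<Sum>i=Suc m..n. d i)"
        using step.IH by simp
      have "c m * (\<Sum>i=Suc m..n. d i) \<le> c (Suc m) * (\<Sum>i=Suc m..n. d i)"
        using mono[of m "Suc m"] S[of "Suc m"] m1 step.hyps by (intro mult_right_mono) auto
      then show "(\<Sum>i=m..n. c i * d i) \<ge> c m * (\<Sum>i=m..n. d i)"
        using e1 e2 ih by (simp add: distrib_left)
    qed
  qed
  have "c 1 * (\<Sum>i=1..n. d i) \<ge> 0" using c1 S[of 1] n by simp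
  then show ?thesis using key[of 1] n by simp
qed

lemma abel_prefix:
  fixes c d :: "nat \<Rightarrow> real" and n :: nat
  assumes mono: "\<And>i j. 1 \<le> i \<Longrightarrow> i \<le> j \<Longrightarrow> j \<le> n \<Longrightarrow> c j \<le> c i"
    and cn: "c n \<ge> 0" and S: "\<And>j. 1 \<le> j \<Longrightarrow> j \<le> n \<Longrightarrow> (\<Sum>i=1..j. d i) \<le> 0"
    and n: "n \<ge> 1"
  shows "(\<Sum>i=1..n. c i * d i) \<le> 0"
proof -
  have key: "m \<le> n \<longrightarrow> (\<Sum>i=1..m. c i * d i) \<le> c m * (\<Sum>i=1..m. d i)" if "1 \<le> m" for m
    using that
  proof (induction m rule: dec_induct)
    case base
    then show ?case by simp
  next
    case (step m)
    show ?case
    proof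
      assume mn: "Suc m \<le> n"
      have e1: "(\<Sum>i=1..Suc m. c i * d i) = (\<Sum>i=1..m. c i * d i) + c (Suc m) * d (Suc m)"
        by simp
      have e2: "(\<Sum>i=1..Suc m. d i) = (\<Sum>i=1..m. d i) + d (Suc m)"
        by simp
      have ih: "(\<Sum>i=1..m. c i * d i) \<le> c m * (\<Sum>i=1..m. d i)"
        using step.IH mn by simp
      have "c m * (\<Sum>i=1..m. d i) \<le> c (Suc m) * (\<Sum>i=1..m. d i)"
        using mono[of m "Suc m"] S[of m] mn step.hyps by (intro mult_right_mono_neg) auto
      then show "(\<Sum>i=1..Suc m. c i * d i) \<le> c (Suc m) * (\<Sum>i=1..Suc m. d i)"
        using e1 e2 ih by (simp add: distrib_left)
    qed
  qed
  have "c n * (\<Sum>i=1..n. d i) \<le> 0" using cn S[of n] n by (simp add: mult_nonneg_nonpos)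
  then show ?thesis using key[of n] n by simp
qed

lemma ord_stat_mono:
  assumes "1 \<le> i" "i \<le> j" "j \<le> n"
  shows "ord_stat n lam i \<le> ord_stat n lam j"
  unfolding ord_stat_def
  by (rule sorted_nth_mono) (use assms in auto)

lemma ord_stat_mem:
  assumes "1 \<le> k" "k \<le> n"
  shows "ord_stat n lam k \<in> lam ` {1..n}"
proof -
  have "ord_stat n lam k \<in> set (sort (map lam [1..<Suc n]))"
    unfolding ord_stat_def by (rule nth_mem) (use assms in auto)
  then show ?thesis by auto
qed

lemma ord_stat_sum:
  fixes f :: "real \<Rightarrow> real"
  shows "(\<Sum>k=1..n. f (ord_stat n lam k)) = (\<Sum>i=1..n. f (lam i))"
proof -
  let ?s = "sort (map lam [1..<Suc n])"
  have "(\<Sum>k=1..n. f (ord_stat n lam k)) = (\<Sum>k=0..<n. f (?s ! k))"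
    unfolding ord_stat_def
    by (rule sum.reindex_bij_witness[where i="\<lambda>k. Suc k" and j="\<lambda>k. k - 1"]) auto
  also have "\<dots> = sum_list (map f ?s)"
    by (simp add: sum_list_sum_nth)
  also have "\<dots> = sum_list (map f (map lam [1..<Suc n]))"
    by (metis mset_map mset_sort sum_mset_sum_list)
  also have "\<dots> = (\<Sum>i=1..n. f (lam i))"
    proof -
    have "sum_list (map f (map lam [1..<Suc n])) = sum_list (map (\<lambda>i. f (lam i)) [1..<Suc n])"
      by (simp add: comp_def)
    also have "\<dots> = (\<Sum>i\<in>{1..<Suc n}. f (lam i))"
      using sum_set_upt_conv_sum_list_nat[of "\<lambda>i. f (lam i)" 1 "Suc n"] by (simp only: set_upt)
    finally show ?thesis by (simp add: atLeastLessThanSuc_atLeastAtMost)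
  qed
  finally show ?thesis .
qed

lemma ord_stat_pos:
  assumes "\<forall>i\<in>{1..n}. lam i > 0" "1 \<le> k" "k \<le> n"
  shows "ord_stat n lam k > 0"
  using ord_stat_mem[of k n lam] assms by auto

lemma rh_Gf:
  assumes "L \<le> L'" "alpha > 0"
  shows "rh_le (Gf mu alpha L) (Gf mu alpha L')"
  unfolding rh_le_def rev_hazard_Gf
proof
  fix x
  have "0 \<le> alpha * (x - mu) powr (- alpha - 1)" using assms by simp
  then show "(if mu < x then alpha * (x - mu) powr (- alpha - 1) * L else 0)
        \<le> (if mu < x then alpha * (x - mu) powr (- alpha - 1) * L' else 0)"
    using assms mult_left_mono by auto
qed

lemma cdf_Gf:
  assumes "prob_space M" "n \<ge> 1"
    and "prob_space.indep_vars M (\<lambda>_. borel) X {1..n}"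
    and "\<forall>i\<in>{1..n}. is_frechet M (X i) mu (lam i) alpha"
    and "\<forall>i\<in>{1..n}. lam i > 0"
  shows "max_cdf M X n = Gf mu alpha (\<Sum>i\<in>{1..n}. lam i powr alpha)"
proof
  fix x show "max_cdf M X n x = Gf mu alpha (\<Sum>i\<in>{1..n}. lam i powr alpha) x"
    using max_cdf_prod[OF assms(1-4)] prod_frechet[OF assms(2,5)] by simp
qed

lemma major_i:
  fixes lam lam' :: "nat \<Rightarrow> real"
  assumes n: "n \<ge> 1" and al: "alpha \<ge> 1"
    and p: "\<forall>i\<in>{1..n}. lam i > 0" and p': "\<forall>i\<in>{1..n}. lam' i > 0"
    and S: "\<forall>j\<in>{1..n}. (\<Sum>i=j..n. ord_stat n lam' i) \<le> (\<Sum>i=j..n. ord_stat n lam i)"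
  shows "(\<Sum>i\<in>{1..n}. lam' i powr alpha) \<le> (\<Sum>i\<in>{1..n}. lam i powr alpha)"
proof -
  define a where "a k = ord_stat n lam k" for k
  define b where "b k = ord_stat n lam' k" for k
  define c where "c k = alpha * b k powr (alpha - 1)" for k
  have apos: "a k > 0" if "1 \<le> k" "k \<le> n" for k using ord_stat_pos[OF p that] a_def by simp
  have bpos: "b k > 0" if "1 \<le> k" "k \<le> n" for k using ord_stat_pos[OF p' that] b_def by simp
  have "(\<Sum>i\<in>{1..n}. lam i powr alpha) - (\<Sum>i\<in>{1..n}. lam' i powr alpha)
      = (\<Sum>k=1..n. a k powr alpha - b k powr alpha)"
    using ord_stat_sum[of "\<lambda>t. t powr alpha" n lam] ord_stat_sum[of "\<lambda>t. t powr alpha" n lam']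
    by (simp add: a_def b_def sum_subtractf)
  also have "\<dots> \<ge> (\<Sum>k=1..n. c k * (a k - b k))"
    by (rule sum_mono) (use tangent_convex[OF al] apos bpos in \<open>auto simp: c_def\<close>)
  moreover have "(\<Sum>k=1..n. c k * (a k - b k)) \<ge> 0"
  proof (rule abel_suffix[OF _ _ _ n])
    fix i j assume ij: "1 \<le> i" "i \<le> j" "j \<le> n"
    have "b i \<le> b j" using ord_stat_mono[OF ij] b_def by simp
    then have "b i powr (alpha - 1) \<le> b j powr (alpha - 1)"
      using al bpos[of i] ij by (intro powr_mono2) auto
    then show "c i \<le> c j" unfolding c_def using al by (intro mult_left_mono) auto
  next
    show "c 1 \<ge> 0" using al by (simp add: c_def)
  next
    fix j assume "1 \<le> j" "j \<le> n"
    then show "(\<Sum>i=j..n. a i - b i) \<ge> 0" using S by (simp add: a_def b_def sum_subtractf)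
  qed
  ultimately show ?thesis by linarith
qed

lemma major_ii:
  fixes lam lam' :: "nat \<Rightarrow> real"
  assumes n: "n \<ge> 1" and al: "alpha \<le> 1" and al0: "alpha > 0"
    and p: "\<forall>i\<in>{1..n}. lam i > 0" and p': "\<forall>i\<in>{1..n}. lam' i > 0"
    and S: "\<forall>j\<in>{1..n}. (\<Sum>i=1..j. ord_stat n lam' i) \<ge> (\<Sum>i=1..j. ord_stat n lam i)"
  shows "(\<Sum>i\<in>{1..n}. lam i powr alpha) \<le> (\<Sum>i\<in>{1..n}. lam' i powr alpha)"
proof -
  define a where "a k = ord_stat n lam k" for k
  define b where "b k = ord_stat n lam' k" for k
  define c where "c k = alpha * b k powr (alpha - 1)" for k
  have apos: "a k > 0" if "1 \<le> k" "k \<le> n" for k using ord_stat_pos[OF p that] a_def by simp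
  have bpos: "b k > 0" if "1 \<le> k" "k \<le> n" for k using ord_stat_pos[OF p' that] b_def by simp
  have "(\<Sum>i\<in>{1..n}. lam i powr alpha) - (\<Sum>i\<in>{1..n}. lam' i powr alpha)
      = (\<Sum>k=1..n. a k powr alpha - b k powr alpha)"
    using ord_stat_sum[of "\<lambda>t. t powr alpha" n lam] ord_stat_sum[of "\<lambda>t. t powr alpha" n lam']
    by (simp add: a_def b_def sum_subtractf)
  also have "\<dots> \<le> (\<Sum>k=1..n. c k * (a k - b k))"
    by (rule sum_mono) (use tangent_concave[OF al] apos bpos al0 in \<open>auto simp: c_def\<close>)
  moreover have "(\<Sum>k=1..n. c k * (a k - b k)) \<le> 0"
  proof (rule abel_prefix[OF _ _ _ n])
    fix i j assume ij: "1 \<le> i" "i \<le> j" "j \<le> n"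
    have "b i \<le> b j" using ord_stat_mono[OF ij] b_def by simp
    then have "b j powr (alpha - 1) \<le> b i powr (alpha - 1)"
      using al bpos[of i] ij by (intro powr_mono2') auto
    then show "c j \<le> c i" unfolding c_def using al0 by (intro mult_left_mono) auto
  next
    show "c n \<ge> 0" using al0 by (simp add: c_def)
  next
    fix j assume "1 \<le> j" "j \<le> n"
    then show "(\<Sum>i=1..j. a i - b i) \<le> 0" using S by (simp add: a_def b_def sum_subtractf)
  qed
  ultimately show ?thesis by linarith
qed

theorem mainTheorem10:
  fixes M :: "'a measure" and M' :: "'b measure"
    and X :: "nat \<Rightarrow> 'a \<Rightarrow> real" and X' :: "nat \<Rightarrow> 'b \<Rightarrow> real"
    and lam lam' :: "nat \<Rightarrow> real" and mu alpha :: real and n :: nat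
  assumes "prob_space M" and "prob_space M'"
    and "n \<ge> 1" and "alpha > 0"
    and "\<forall>i\<in>{1..n}. lam i > 0" and "\<forall>i\<in>{1..n}. lam' i > 0"
    and "prob_space.indep_vars M (\<lambda>_. borel) X {1..n}"
    and "prob_space.indep_vars M' (\<lambda>_. borel) X' {1..n}"
    and "\<forall>i\<in>{1..n}. is_frechet M (X i) mu (lam i) alpha"
    and "\<forall>i\<in>{1..n}. is_frechet M' (X' i) mu (lam' i) alpha"
  shows "(alpha \<ge> 1 \<and>
          (\<forall>j\<in>{1..n}. (\<Sum>i=j..n. ord_stat n lam' i) \<le> (\<Sum>i=j..n. ord_stat n lam i))
          \<longrightarrow> rh_le (max_cdf M' X' n) (max_cdf M X n))
       \<and> (alpha \<le> 1 \<and>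
          (\<forall>j\<in>{1..n}. (\<Sum>i=1..j. ord_stat n lam' i) \<ge> (\<Sum>i=1..j. ord_stat n lam i))
          \<longrightarrow> rh_le (max_cdf M X n) (max_cdf M' X' n))"
proof -
  have G1: "max_cdf M X n = Gf mu alpha (\<Sum>i\<in>{1..n}. lam i powr alpha)"
    using cdf_Gf assms by blast
  have G2: "max_cdf M' X' n = Gf mu alpha (\<Sum>i\<in>{1..n}. lam' i powr alpha)"
    using cdf_Gf assms by blast
  show ?thesis
    unfolding G1 G2
    using rh_Gf major_i[of n alpha lam lam'] major_ii[of n alpha lam lam'] assms
    by blast
qed

end
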